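(* Let $q$ be a prime power, $2\le k\le n$, and let $\mathcal{C}\subseteq\mathbb{F}_q^n$ be a linear code of dimension $k$ and minimum distance $d$. Then $$\mathbb{E}[\mathcal{C}] = n(H_n-H_{d-1}) - \sum_{r=k}^{n-d}\frac{1}{\binom{n-1}{r}}\sum_{\ell=0}^{n-r}\binom{n-\ell}{r}\sum_{m=0}^{n}(-1)^m\, W_\ell(\mathcal{C}\otimes_{\mathbb{F}_q}\mathbb{F}_{q^m})\,\gamma(q,m,n),$$ where $$\gamma(q,m,n)=\sum_{j=m}^n\Bigg(\prod_{\nu=0}^{j-1}\frac{1}{q^j-q^\nu}\Bigg) q^{\binom{j}{2}+\binom{j-m}{2}}\binom{j}{m}_q,$$ and with the convention that $\mathcal{C}\otimes_{\mathbb{F}_q}\mathbb{F}_{q^0}$ is the zero code.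
   Context: For $m\ge1$, the extension code $\mathcal{C}\otimes_{\mathbb{F}_q}\mathbb{F}_{q^m}\subseteq\mathbb{F}_{q^m}^n$ is the set of all $\mathbb{F}_{q^m}$-linear combinations of codewords of $\mathcal{C}$. For a code $\mathcal{D}$, $W_\ell(\mathcal{D})$ is the number of codewords of Hamming weight $\ell$ (so for the zero code $W_0=1$ and $W_\ell=0$ for $\ell>0$). $\binom{a}{b}_q$ is the Gaussian binomial coefficient; an empty product equals $1$. $H_m=\sum_{i=1}^m 1/i$, $H_0=0$. $\mathbb{E}[\mathcal{C}]$ is $\mathbb{E}[G]$ for any generator matrix $G\in\mathbb{F}_q^{k\times n}$ of $\mathcal{C}$, the expected number of draws when columns of $G$ are drawn independently and uniformly at random from its $n$ columns (with repetition) until the drawn columns span $\mathbb{F}_q^k$. *)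

theory Defs
  imports "HOL-Analysis.Analysis" "HOL-Library.FuncSet"
begin

(* Vectors of F_q^n are 'a ^ 'n with 'a a finite field (q = CARD('a)) and n = CARD('n).
   Linear codes are subspaces w.r.t. the library's vector space structure vec (scalar mult *s). *)

definition hweight :: "'a::zero ^ 'n \<Rightarrow> nat" where
  "hweight x = card {j. x $ j \<noteq> 0}"

definition min_dist :: "('a::zero ^ 'n) set \<Rightarrow> nat" where
  "min_dist C = Min (hweight ` (C - {0}))"

definition generator_matrix :: "('a::field ^ 'n) set \<Rightarrow> 'a ^ 'n ^ 'k \<Rightarrow> bool" where
  "generator_matrix C G \<longleftrightarrow> inj (\<lambda>u. u v* G) \<and> range (\<lambda>u. u v* G) = C"

definition draws_span :: "'a::field ^ 'n ^ 'k \<Rightarrow> nat \<Rightarrow> (nat \<Rightarrow> 'n) \<Rightarrow> bool" where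
  "draws_span G t s \<longleftrightarrow> vec.span ((\<lambda>i. column (s i) G) ` {..<t}) = UNIV"

(* Probability that the stopping time T (number of draws until the drawn columns span F_q^k)
   equals t, the draws being i.i.d. uniform on the n columns. *)
definition stop_prob :: "'a::field ^ 'n ^ 'k \<Rightarrow> nat \<Rightarrow> real" where
  "stop_prob G t =
     real (card {s \<in> {..<t} \<rightarrow>\<^sub>E (UNIV :: 'n set).
                    draws_span G t s \<and> \<not> draws_span G (t - 1) s})
     / real (CARD('n)) ^ t"

definition expected_draws :: "'a::field ^ 'n ^ 'k \<Rightarrow> real" where
  "expected_draws G = (\<Sum>t. real t * stop_prob G t)"

(* Extension code C \<otimes>_{F_q} F_{q^m}: identifying F_{q^m} with F_q^m via an F_q-basis,
   a vector of F_{q^m}^n is an m-tuple (X 0, ..., X (m-1)) of vectors of F_q^n, and it lies in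
   the F_{q^m}-span of C iff every component X i lies in C. *)
definition ext_code :: "('a::zero ^ 'n) set \<Rightarrow> nat \<Rightarrow> (nat \<Rightarrow> 'a ^ 'n) set" where
  "ext_code C m = {X. (\<forall>i<m. X i \<in> C) \<and> (\<forall>i\<ge>m. X i = 0)}"

(* Hamming weight over F_{q^m}: coordinate j is nonzero iff some F_q-component is nonzero. *)
definition ext_weight :: "(nat \<Rightarrow> 'a::zero ^ 'n) \<Rightarrow> nat" where
  "ext_weight X = card {j. \<exists>i. X i $ j \<noteq> 0}"

definition W_ext :: "('a::zero ^ 'n) set \<Rightarrow> nat \<Rightarrow> nat \<Rightarrow> nat" where
  "W_ext C m l = card {X \<in> ext_code C m. ext_weight X = l}"

definition gauss_binom :: "real \<Rightarrow> nat \<Rightarrow> nat \<Rightarrow> real" where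
  "gauss_binom q a b = (if b \<le> a then (\<Prod>i<b. (q ^ (a - i) - 1) / (q ^ (i + 1) - 1)) else 0)"

definition gamma_coeff :: "real \<Rightarrow> nat \<Rightarrow> nat \<Rightarrow> real" where
  "gamma_coeff q m n = (\<Sum>j=m..n. (\<Prod>\<nu><j. 1 / (q ^ j - q ^ \<nu>))
        * q ^ ((j choose 2) + ((j - m) choose 2)) * gauss_binom q j m)"

end

theory Submission
  imports Defs
begin


lemma choose2_Suc: "Suc n choose 2 = (n choose 2) + n"
  by (simp add: numeral_2_eq_2)

lemma gb_eq:
  "gauss_binom q a b = (\<Prod>i<b. (q^(a-i) - 1)) / (\<Prod>i<b. (q^(i+1) - 1))"
proof (cases "b \<le> a")
  case True
  then show ?thesis by (simp add: gauss_binom_def prod_dividef)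
next
  case False
  then have "a \<in> {..<b}" by simp
  then have "(\<Prod>i<b. (q^(a-i) - 1)) = 0"
    by (subst prod_zero_iff) (auto intro!: exI[of _ a] bexI[of _ a])
  with False show ?thesis by (simp add: gauss_binom_def)
qed

lemma gb_zero_right [simp]: "gauss_binom q a 0 = 1"
  by (simp add: gauss_binom_def)

lemma gb_gt [simp]: "a < b \<Longrightarrow> gauss_binom q a b = 0"
  by (simp add: gauss_binom_def)

lemma D_nz: "(q::real) > 1 \<Longrightarrow> (\<Prod>i<b. (q^(i+1) - 1)) \<noteq> 0"
proof -
  assume q: "q > 1"
  have "q^(i+1) - 1 \<noteq> 0" for i using q
    by (metis less_numeral_extra(4) one_less_power right_minus_eq zero_less_Suc Suc_eq_plus1)
  then show ?thesis by (subst prod_zero_iff) auto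
qed

lemma gb_pascal:
  assumes q: "(q::real) > 1"
  shows "gauss_binom q (Suc j) (Suc m) = gauss_binom q j m + q^(Suc m) * gauss_binom q j (Suc m)"
proof -
  define A where "A = (\<Prod>i<m. (q^(j-i) - 1))"
  define D where "D = (\<Prod>i<m. (q^(i+1) - 1))"
  have D: "D \<noteq> 0" unfolding D_def using D_nz[OF q] .
  have qm: "q^(Suc m) - 1 \<noteq> 0" using q
    by (metis less_numeral_extra(4) one_less_power right_minus_eq zero_less_Suc)
  have A1: "(\<Prod>i<Suc m. (q^(Suc j-i) - 1)) = (q^(Suc j) - 1) * A"
    unfolding A_def by (subst prod.lessThan_Suc_shift) simp
  have A2: "(\<Prod>i<Suc m. (q^(j-i) - 1)) = A * (q^(j-m) - 1)"
    unfolding A_def by simp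
  have D2: "(\<Prod>i<Suc m. (q^(i+1) - 1)) = D * (q^(Suc m) - 1)"
    unfolding D_def by simp
  show ?thesis
  proof (cases "m \<le> j")
    case True
    have e: "q^j = q^m * q^(j-m)"
      using True by (simp flip: power_add)
    show ?thesis
      unfolding gb_eq A1 A2 D2 A_def[symmetric] D_def[symmetric]
      using D qm by (simp add: field_simps e)
  next
    case False
    then have "j \<in> {..<m}" by simp
    then have "A = 0" unfolding A_def by (subst prod_zero_iff) (auto intro!: exI[of _ j] bexI[of _ j])
    then show ?thesis
      unfolding gb_eq A1 A2 D2 A_def[symmetric] D_def[symmetric] by simp
  qed
qed

lemma gb_diag: "(q::real) > 1 \<Longrightarrow> gauss_binom q j j = 1"
  by (induction j) (simp_all add: gb_pascal)

definition coefq :: "real \<Rightarrow> nat \<Rightarrow> nat \<Rightarrow> real" where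
  "coefq q j m = gauss_binom q j m * (-1)^(j-m) * q^((j-m) choose 2)"

lemma coefq_gt: "j < m \<Longrightarrow> coefq q j m = 0"
  by (simp add: coefq_def)

lemma coefq_0: "(q::real) > 1 \<Longrightarrow> coefq q (Suc j) 0 = -(q^j) * coefq q j 0"
  by (simp add: coefq_def choose2_Suc power_add)

lemma coefq_step:
  assumes q: "(q::real) > 1" and m: "m \<le> j"
  shows "coefq q (Suc j) (Suc m) = coefq q j m - q^j * coefq q j (Suc m)"
proof (cases "m = j")
  case True
  then show ?thesis using q by (simp add: coefq_def gb_diag)
next
  case False
  with m obtain b where j: "j = m + Suc b" by (metis add_Suc_right le_eq_less_or_eq less_imp_Suc_add)
  have e1: "Suc j - Suc m = Suc b" "j - m = Suc b" "j - Suc m = b" using j by auto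
  show ?thesis
    unfolding coefq_def gb_pascal[OF q] e1 choose2_Suc
    by (simp add: j power_add algebra_simps)
qed

lemma gauss_poly:
  assumes q: "(q::real) > 1"
  shows "(\<Prod>\<nu><j. (x - q^\<nu>)) = (\<Sum>m\<le>j. coefq q j m * x^m)"
proof (induction j)
  case 0
  then show ?case by (simp add: coefq_def numeral_2_eq_2)
next
  case (Suc j)
  have ext: "(\<Sum>m\<le>j. coefq q j m * x^m) = coefq q j 0 + (\<Sum>m\<le>j. coefq q j (Suc m) * x^(Suc m))"
  proof -
    have "(\<Sum>m\<le>j. coefq q j m * x^m) = (\<Sum>m\<le>Suc j. coefq q j m * x^m)"
      by (simp add: coefq_gt)
    also have "\<dots> = coefq q j 0 + (\<Sum>m\<le>j. coefq q j (Suc m) * x^(Suc m))"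
      by (subst sum.atMost_Suc_shift) simp
    finally show ?thesis .
  qed
  have "(\<Prod>\<nu><Suc j. (x - q^\<nu>)) = (x - q^j) * (\<Sum>m\<le>j. coefq q j m * x^m)"
    by (simp add: Suc)
  also have "\<dots> = (\<Sum>m\<le>j. coefq q j m * x^(Suc m)) - q^j * (\<Sum>m\<le>j. coefq q j m * x^m)"
    by (simp only: left_diff_distrib sum_distrib_left) (simp add: mult_ac sum_subtractf)
  also have "\<dots> = (\<Sum>m\<le>j. coefq q j m * x^(Suc m)) - q^j * coefq q j 0 - (\<Sum>m\<le>j. q^j * coefq q j (Suc m) * x^(Suc m))"
    unfolding ext by (simp add: algebra_simps sum_distrib_left)
  also have "\<dots> = coefq q (Suc j) 0 + (\<Sum>m\<le>j. coefq q (Suc j) (Suc m) * x^(Suc m))"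
    using q by (simp add: coefq_0 coefq_step algebra_simps sum_subtractf)
  also have "\<dots> = (\<Sum>m\<le>Suc j. coefq q (Suc j) m * x^m)"
    by (subst sum.atMost_Suc_shift) simp
  finally show ?case .
qed

lemma gb_ratio:
  assumes q: "(q::real) > 1"
  shows "(\<Prod>\<nu><j. 1 / (q^j - q^\<nu>)) * (\<Prod>\<nu><j. (q^u - q^\<nu>)) = gauss_binom q u j"
proof (cases "j \<le> u")
  case True
  have f1: "(\<Prod>\<nu><j. (q^u - q^\<nu>)) = (\<Prod>\<nu><j. q^\<nu>) * (\<Prod>\<nu><j. (q^(u-\<nu>) - 1))"
  proof -
    have "(\<Prod>\<nu><j. (q^u - q^\<nu>)) = (\<Prod>\<nu><j. q^\<nu> * (q^(u-\<nu>) - 1))"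
    proof (rule prod.cong[OF refl])
      fix \<nu> assume "\<nu> \<in> {..<j}"
      then have "q^u = q^\<nu> * q^(u-\<nu>)" using True by (simp flip: power_add)
      then show "q^u - q^\<nu> = q^\<nu> * (q^(u-\<nu>) - 1)" by (simp add: algebra_simps)
    qed
    then show ?thesis by (simp add: prod.distrib)
  qed
  have f2: "(\<Prod>\<nu><j. (q^j - q^\<nu>)) = (\<Prod>\<nu><j. q^\<nu>) * (\<Prod>i<j. (q^(i+1) - 1))"
  proof -
    have "(\<Prod>\<nu><j. (q^j - q^\<nu>)) = (\<Prod>\<nu><j. q^\<nu> * (q^(j-\<nu>) - 1))"
    proof (rule prod.cong[OF refl])
      fix \<nu> assume "\<nu> \<in> {..<j}"
      then have "q^j = q^\<nu> * q^(j-\<nu>)" by (simp flip: power_add)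
      then show "q^j - q^\<nu> = q^\<nu> * (q^(j-\<nu>) - 1)" by (simp add: algebra_simps)
    qed
    also have "\<dots> = (\<Prod>\<nu><j. q^\<nu>) * (\<Prod>\<nu><j. (q^(j-\<nu>) - 1))"
      by (simp add: prod.distrib)
    also have "(\<Prod>\<nu><j. (q^(j-\<nu>) - 1)) = (\<Prod>i<j. (q^(j - Suc i + 1) - 1))"
    proof (rule prod.cong[OF refl])
      fix i assume "i \<in> {..<j}"
      then have "j - Suc i + 1 = j - i" by simp
      then show "q^(j-i) - 1 = q^(j - Suc i + 1) - 1" by simp
    qed
    also have "\<dots> = (\<Prod>i<j. (q^(i+1) - 1))"
      by (rule prod.nat_diff_reindex)
    finally show ?thesis .
  qed
  have nz: "(\<Prod>\<nu><j. q^\<nu>) \<noteq> 0" using q by (simp add: prod_zero_iff)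
  have "(\<Prod>\<nu><j. 1 / (q^j - q^\<nu>)) = 1 / (\<Prod>\<nu><j. (q^j - q^\<nu>))"
    by (simp add: prod_dividef)
  then have "(\<Prod>\<nu><j. 1 / (q^j - q^\<nu>)) * (\<Prod>\<nu><j. (q^u - q^\<nu>))
     = (1 / ((\<Prod>\<nu><j. q^\<nu>) * (\<Prod>i<j. (q^(i+1) - 1)))) * ((\<Prod>\<nu><j. q^\<nu>) * (\<Prod>\<nu><j. (q^(u-\<nu>) - 1)))"
    by (simp only: f1 f2)
  also have "\<dots> = (\<Prod>\<nu><j. (q^(u-\<nu>) - 1)) / (\<Prod>i<j. (q^(i+1) - 1))"
    using nz D_nz[OF q, of j] q by (simp del: power_Suc add: field_simps)
  finally show ?thesis by (simp only: gb_eq)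
next
  case False
  then have "(\<Prod>\<nu><j. (q^u - q^\<nu>)) = 0"
    by (subst prod_zero_iff) (auto intro!: exI[of _ u] bexI[of _ u])
  with False show ?thesis by simp
qed

lemma T_alt:
  assumes q: "(q::real) > 1"
  shows "(\<Sum>j\<le>u. (-1)^j * q^(j choose 2) * gauss_binom q u j) = (if u = 0 then 1 else 0)"
proof (cases u)
  case 0
  then show ?thesis by (simp add: numeral_2_eq_2)
next
  case (Suc v)
  define a where "a m = (-1)^m * q^(Suc m choose 2) * gauss_binom q v m" for m
  have t: "(-1)^(Suc m) * q^(Suc m choose 2) * gauss_binom q (Suc v) (Suc m) = a (Suc m) - a m" for m
    unfolding a_def gb_pascal[OF q] choose2_Suc[of "Suc m"]
    by (simp add: power_add algebra_simps)
  have "(\<Sum>j\<le>Suc v. (-1)^j * q^(j choose 2) * gauss_binom q (Suc v) j)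
      = 1 + (\<Sum>m\<le>v. (-1)^(Suc m) * q^(Suc m choose 2) * gauss_binom q (Suc v) (Suc m))"
    by (subst sum.atMost_Suc_shift) (simp add: binomial_eq_0)
  also have "\<dots> = 1 + (\<Sum>m<Suc v. a (Suc m) - a m)"
    by (simp only: t lessThan_Suc_atMost)
  also have "\<dots> = 1 + a (Suc v) - a 0"
    by (simp add: sum_lessThan_telescope)
  also have "\<dots> = 0" by (simp add: a_def numeral_2_eq_2)
  finally show ?thesis using Suc by simp
qed

lemma gamma_identity:
  assumes q: "(q::real) > 1" and u: "u \<le> n"
  shows "(\<Sum>m=0..n. (-1)^m * gamma_coeff q m n * (q^u)^m) = (if u = 0 then 1 else 0)"
proof -
  define x where "x = q^u"
  define c where "c j = (\<Prod>\<nu><j. 1 / (q^j - q^\<nu>))" for j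
  define F where "F m j = (-1)^m * c j * q^((j choose 2) + ((j - m) choose 2)) * gauss_binom q j m * x^m" for m j
  have "(\<Sum>m=0..n. (-1)^m * gamma_coeff q m n * x^m) = (\<Sum>m\<in>{0..n}. \<Sum>j\<in>{j. j \<in> {0..n} \<and> m \<le> j}. F m j)"
    unfolding gamma_coeff_def F_def c_def
    by (rule sum.cong[OF refl]) (auto simp: sum_distrib_left sum_distrib_right mult_ac intro!: sum.cong)
  also have "\<dots> = (\<Sum>j\<in>{0..n}. \<Sum>m\<in>{m. m \<in> {0..n} \<and> m \<le> j}. F m j)"
    by (rule sum.swap_restrict) auto
  also have "\<dots> = (\<Sum>j\<in>{0..n}. c j * q^(j choose 2) * (-1)^j * (\<Sum>m\<le>j. coefq q j m * x^m))"
  proof (rule sum.cong[OF refl])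
    fix j assume j: "j \<in> {0..n}"
    have s: "{m. m \<in> {0..n} \<and> m \<le> j} = {..j}" using j by auto
    show "(\<Sum>m\<in>{m. m \<in> {0..n} \<and> m \<le> j}. F m j) = c j * q^(j choose 2) * (-1)^j * (\<Sum>m\<le>j. coefq q j m * x^m)"
      unfolding s sum_distrib_left
    proof (rule sum.cong[OF refl])
      fix m assume "m \<in> {..j}"
      then have mj: "m \<le> j" by simp
      have sg: "(-1::real)^m = (-1)^j * (-1)^(j-m)"
      proof -
        have "(-1::real)^j * (-1)^(j-m) = (-1)^(j + (j-m))" by (simp add: power_add)
        also have "j + (j-m) = 2*(j-m) + m" using mj by simp
        finally show ?thesis by (simp add: power_add power_mult)
      qed
      show "F m j = c j * q^(j choose 2) * (-1)^j * (coefq q j m * x^m)"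
        unfolding F_def coefq_def sg by (simp add: power_add mult_ac)
    qed
  qed
  also have "\<dots> = (\<Sum>j\<in>{0..n}. (-1)^j * q^(j choose 2) * gauss_binom q u j)"
    unfolding gauss_poly[OF q, symmetric] x_def
    by (rule sum.cong[OF refl]) (simp add: gb_ratio[OF q, symmetric] c_def mult_ac)
  also have "\<dots> = (\<Sum>j\<le>u. (-1)^j * q^(j choose 2) * gauss_binom q u j)"
    using u by (intro sum.mono_neutral_right) auto
  also have "\<dots> = (if u = 0 then 1 else 0)" by (rule T_alt[OF q])
  finally show ?thesis unfolding x_def .
qed



lemma altF:
  fixes y :: real
  assumes "y > real s"
  shows "(\<Sum>i\<le>s. real (s choose i) * (-1)^(s-i) / (y - real i)) = fact s / (\<Prod>i\<le>s. (y - real i))"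
  using assms
proof (induction s arbitrary: y)
  case 0
  then show ?case by simp
next
  case (Suc s)
  have y1: "y - 1 > real s" using Suc.prems by simp
  note IH1 = Suc.IH[OF y1]
  have y0: "y > real s" using Suc.prems by simp
  note IH0 = Suc.IH[OF y0]
  define g where "g i = real (s choose i) * (-1)^(Suc s - i) / (y - real i)" for i
  have negF: "(\<Sum>i\<le>Suc s. g i) = - (\<Sum>i\<le>s. real (s choose i) * (-1)^(s-i) / (y - real i))"
  proof -
    have "(\<Sum>i\<le>Suc s. g i) = (\<Sum>i\<le>s. g i)" by (simp add: g_def)
    also have "\<dots> = (\<Sum>i\<le>s. - (real (s choose i) * (-1)^(s-i) / (y - real i)))"
      by (rule sum.cong[OF refl]) (simp add: g_def Suc_diff_le)
    finally show ?thesis by (simp add: sum_negf)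
  qed
  have "(\<Sum>i\<le>Suc s. real (Suc s choose i) * (-1)^(Suc s - i) / (y - real i))
      = (-1)^(Suc s) / y + (\<Sum>j\<le>s. real (Suc s choose Suc j) * (-1)^(s - j) / (y - real (Suc j)))"
    by (subst sum.atMost_Suc_shift) simp
  also have "\<dots> = (-1)^(Suc s) / y + (\<Sum>j\<le>s. real (s choose j) * (-1)^(s - j) / ((y - 1) - real j))
                 + (\<Sum>j\<le>s. g (Suc j))"
    by (simp add: g_def sum.distrib add_divide_distrib distrib_right algebra_simps)
  also have "(\<Sum>j\<le>s. g (Suc j)) = (\<Sum>i\<le>Suc s. g i) - g 0"
    by (subst sum.atMost_Suc_shift) simp
  also have "g 0 = (-1)^(Suc s) / y" by (simp add: g_def)
  finally have eq: "(\<Sum>i\<le>Suc s. real (Suc s choose i) * (-1)^(Suc s - i) / (y - real i))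
     = fact s / (\<Prod>i\<le>s. (y - 1 - real i)) - fact s / (\<Prod>i\<le>s. (y - real i))"
    using IH1 IH0 negF by simp
  define P where "P = (\<Prod>i\<le>s. (y - 1 - real i))"
  define Q where "Q = (\<Prod>i\<le>s. (y - real i))"
  have Pnz: "P \<noteq> 0" unfolding P_def using y1 by (auto simp: prod_zero_iff)
  have Qnz: "Q \<noteq> 0" unfolding Q_def using y0 by (auto simp: prod_zero_iff)
  have R1: "(\<Prod>i\<le>Suc s. (y - real i)) = y * P"
    unfolding P_def by (subst prod.atMost_Suc_shift) (simp add: algebra_simps)
  have R2: "(\<Prod>i\<le>Suc s. (y - real i)) = Q * (y - real (Suc s))"
    unfolding Q_def by simp
  have yP: "y * P = Q * (y - real (Suc s))" using R1 R2 by simp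
  have ynz: "y \<noteq> 0" and ys: "y - real (Suc s) \<noteq> 0" using Suc.prems by auto
  have "fact s / P - fact s / Q = fact (Suc s) / (y * P)"
  proof -
    have key: "y * (Q - P) = real (Suc s) * Q" using yP by (simp add: algebra_simps)
    have "fact s / P - fact s / Q = fact s * (y * (Q - P)) / (y * P * Q)"
      using Pnz Qnz ynz by (simp add: field_simps)
    also have "\<dots> = fact s * (real (Suc s) * Q) / (y * P * Q)" using key by simp
    also have "\<dots> = fact (Suc s) / (y * P)" using Qnz Pnz ynz by (simp add: field_simps)
    finally show ?thesis .
  qed
  then show ?case using eq R1 unfolding P_def Q_def by simp
qed

lemma prodfact:
  assumes "s < n"
  shows "(\<Prod>i\<le>s. (real n - real i)) * fact (n - Suc s) = (fact n :: real)"
  using assms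
proof (induction s)
  case 0
  then show ?case by (simp add: fact_reduce[of n])
next
  case (Suc s)
  have f: "(fact (n - Suc s) :: real) = real (n - Suc s) * fact (n - Suc (Suc s))"
    using Suc.prems by (simp add: fact_reduce[of "n - Suc s"] Suc_diff_Suc)
  have "(\<Prod>i\<le>Suc s. (real n - real i)) * fact (n - Suc (Suc s))
      = (\<Prod>i\<le>s. (real n - real i)) * (real n - real (Suc s)) * fact (n - Suc (Suc s))"
    by simp
  also have "\<dots> = (\<Prod>i\<le>s. (real n - real i)) * fact (n - Suc s)"
    using Suc.prems by (simp add: f of_nat_diff)
  also have "\<dots> = fact n" using Suc by simp
  finally show ?case .
qed

lemma alt_recip:
  assumes "s < n"
  shows "(\<Sum>i\<le>s. real (s choose i) * (-1)^(s-i) * (real n / (real n - real i))) = 1 / real ((n-1) choose s)"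
proof -
  have "(\<Sum>i\<le>s. real (s choose i) * (-1)^(s-i) * (real n / (real n - real i)))
      = real n * (\<Sum>i\<le>s. real (s choose i) * (-1)^(s-i) / (real n - real i))"
    by (simp add: sum_distrib_left mult_ac)
  also have "\<dots> = real n * (fact s / (\<Prod>i\<le>s. (real n - real i)))"
    using assms by (subst altF) auto
  also have "(\<Prod>i\<le>s. (real n - real i)) = fact n / fact (n - Suc s)"
    using prodfact[OF assms] by (simp add: field_simps)
  also have "real n * (fact s / (fact n / fact (n - Suc s))) = fact s * fact (n - 1 - s) / fact (n - 1)"
    using assms by (simp add: fact_reduce[of n] field_simps)
  also have "\<dots> = 1 / real ((n-1) choose s)"
    using assms by (simp add: binomial_fact)
  finally show ?thesis .
qed



definition Sp :: "'a::field^'n^'k \<Rightarrow> 'n set \<Rightarrow> bool" where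
  "Sp G S \<longleftrightarrow> vec.span ((\<lambda>j. column j G) ` S) = UNIV"

definition ns :: "'a::field^'n^'k \<Rightarrow> 'n set \<Rightarrow> real" where
  "ns G S = (if Sp G S then 0 else 1)"

definition gM :: "'a::field^'n^'k \<Rightarrow> 'n set \<Rightarrow> real" where
  "gM G R = (\<Sum>S | R \<subseteq> S. (-1)^(card S - card R) * ns G S)"

lemma Sp_mono: "Sp G S \<Longrightarrow> S \<subseteq> T \<Longrightarrow> Sp G T"
  unfolding Sp_def by (metis image_mono top.extremum_uniqueI vec.span_mono)

lemma draws_span_Sp: "draws_span G t s \<longleftrightarrow> Sp G (s ` {..<t})"
  unfolding draws_span_def Sp_def by (simp add: image_image)

lemma alt_subsets:
  fixes Q S :: "'n::finite set"
  assumes "Q \<subseteq> S"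
  shows "(\<Sum>R | Q \<subseteq> R \<and> R \<subseteq> S. (-1::real)^(card S - card R)) = (if Q = S then 1 else 0)"
proof (cases "Q = S")
  case True
  then have "{R. Q \<subseteq> R \<and> R \<subseteq> S} = {S}" by auto
  then show ?thesis using True by simp
next
  case False
  then have QS: "Q \<subset> S" using assms by auto
  have "(\<Sum>R | Q \<subseteq> R \<and> R \<subseteq> S. (-1::real)^(card S - card R))
      = (\<Sum>R | R \<subseteq> S \<and> Q \<subseteq> R. (-1)^card S * (-1::real)^(card R))"
  proof (rule sum.cong)
    show "{R. Q \<subseteq> R \<and> R \<subseteq> S} = {R. R \<subseteq> S \<and> Q \<subseteq> R}" by auto
  next
    fix R assume "R \<in> {R. R \<subseteq> S \<and> Q \<subseteq> R}"
    then have "card R \<le> card S" by (auto intro: card_mono)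
    then show "(-1::real)^(card S - card R) = (-1)^card S * (-1)^(card R)"
      by (simp add: neg_one_power_add_eq_neg_one_power_diff flip: power_add)
  qed
  also have "\<dots> = (-1)^card S * (\<Sum>R | R \<subseteq> S \<and> Q \<subseteq> R. (-1::real)^(card R))"
    by (simp add: sum_distrib_left)
  also have "(\<Sum>R | R \<subseteq> S \<and> Q \<subseteq> R. (-1::real)^(card R)) = 0"
    by (rule sum_alternating_cancels)
       (use card_subsupersets_even_odd[OF _ QS] in auto)
  finally show ?thesis using False by simp
qed

lemma mob_up:
  fixes f :: "'n::finite set \<Rightarrow> real"
  shows "(\<Sum>R | Q \<subseteq> R. \<Sum>S | R \<subseteq> S. (-1)^(card S - card R) * f S) = f Q"
proof -
  have "(\<Sum>R | Q \<subseteq> R. \<Sum>S | R \<subseteq> S. (-1)^(card S - card R) * f S)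
      = (\<Sum>R\<in>{R. Q \<subseteq> R}. \<Sum>S\<in>{S. S \<in> {S. Q \<subseteq> S} \<and> R \<subseteq> S}. (-1)^(card S - card R) * f S)"
    by (rule sum.cong[OF refl]) (rule sum.cong, auto)
  also have "\<dots> = (\<Sum>S\<in>{S. Q \<subseteq> S}. \<Sum>R\<in>{R. R \<in> {R. Q \<subseteq> R} \<and> R \<subseteq> S}. (-1)^(card S - card R) * f S)"
    by (rule sum.swap_restrict) auto
  also have "\<dots> = (\<Sum>S\<in>{S. Q \<subseteq> S}. (if Q = S then f S else 0))"
  proof (rule sum.cong[OF refl])
    fix S assume "S \<in> {S. Q \<subseteq> S}"
    then have QS: "Q \<subseteq> S" by simp
    have "{R. R \<in> {R. Q \<subseteq> R} \<and> R \<subseteq> S} = {R. Q \<subseteq> R \<and> R \<subseteq> S}" by auto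
    then show "(\<Sum>R\<in>{R. R \<in> {R. Q \<subseteq> R} \<and> R \<subseteq> S}. (-1)^(card S - card R) * f S) = (if Q = S then f S else 0)"
      using alt_subsets[OF QS] by (simp add: sum_distrib_right[symmetric])
  qed
  also have "\<dots> = f Q"
    by (simp add: sum.delta)
  finally show ?thesis .
qed

lemma card_PiE_restr:
  fixes R :: "'n::finite set" and I J :: "nat set"
  assumes "finite J" "I \<subseteq> J"
  shows "card {s \<in> J \<rightarrow>\<^sub>E (UNIV::'n set). s ` I \<subseteq> R} = card R ^ card I * CARD('n) ^ (card J - card I)"
proof -
  have "{s \<in> J \<rightarrow>\<^sub>E (UNIV::'n set). s ` I \<subseteq> R} = (\<Pi>\<^sub>E j\<in>J. if j \<in> I then R else UNIV)"
    using assms(2) by (auto simp: PiE_def Pi_def)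
  then have "card {s \<in> J \<rightarrow>\<^sub>E (UNIV::'n set). s ` I \<subseteq> R} = (\<Prod>j\<in>J. card (if j \<in> I then R else (UNIV::'n set)))"
    using assms(1) by (simp add: card_PiE)
  also have "\<dots> = (\<Prod>j\<in>J. if j \<in> I then card R else CARD('n))"
    by (rule prod.cong) auto
  also have "\<dots> = card R ^ card (J \<inter> I) * CARD('n) ^ card (J - I)"
    using assms(1) by (simp add: prod.If_cases Diff_eq)
  also have "J \<inter> I = I" using assms(2) by auto
  also have "card (J - I) = card J - card I"
    using assms by (simp add: card_Diff_subset finite_subset)
  finally show ?thesis .
qed

lemma count_ns:
  fixes G :: "'a::field^'n^'k" and I J :: "nat set"
  assumes "finite J" "I \<subseteq> J"
  shows "real (card {s \<in> J \<rightarrow>\<^sub>E (UNIV::'n set). \<not> Sp G (s ` I)})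
       = (\<Sum>R\<in>UNIV. gM G R * real (card R) ^ card I * real CARD('n) ^ (card J - card I))"
proof -
  let ?P = "J \<rightarrow>\<^sub>E (UNIV::'n set)"
  have finP: "finite ?P" using assms(1) by (simp add: finite_PiE)
  have "real (card {s \<in> ?P. \<not> Sp G (s ` I)}) = (\<Sum>s\<in>?P. ns G (s ` I))"
    using finP by (simp add: ns_def sum.If_cases Int_def)
  also have "\<dots> = (\<Sum>s\<in>?P. \<Sum>R\<in>{R. R \<in> UNIV \<and> s ` I \<subseteq> R}. gM G R)"
    unfolding gM_def by (rule sum.cong[OF refl]) (simp add: mob_up)
  also have "\<dots> = (\<Sum>R\<in>UNIV. \<Sum>s\<in>{s. s \<in> ?P \<and> s ` I \<subseteq> R}. gM G R)"
    by (rule sum.swap_restrict) (use finP in auto)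
  also have "\<dots> = (\<Sum>R\<in>UNIV. gM G R * real (card R) ^ card I * real CARD('n) ^ (card J - card I))"
  proof (rule sum.cong[OF refl])
    fix R :: "'n set"
    have "(\<Sum>s\<in>{s. s \<in> ?P \<and> s ` I \<subseteq> R}. gM G R) = gM G R * real (card {s \<in> ?P. s ` I \<subseteq> R})"
      by simp
    also have "\<dots> = gM G R * real (card R) ^ card I * real CARD('n) ^ (card J - card I)"
      by (simp add: card_PiE_restr[OF assms])
    finally show "(\<Sum>s\<in>{s. s \<in> ?P \<and> s ` I \<subseteq> R}. gM G R) = gM G R * real (card R) ^ card I * real CARD('n) ^ (card J - card I)" .
  qed
  finally show ?thesis .
qed

lemma stop_prob_formula:
  fixes G :: "'a::field^'n^'k"
  assumes t: "t \<ge> 1"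
  shows "stop_prob G t = (\<Sum>R\<in>UNIV. gM G R * ((real (card R) / real CARD('n))^(t-1) - (real (card R) / real CARD('n))^t))"
proof -
  let ?P = "{..<t} \<rightarrow>\<^sub>E (UNIV::'n set)"
  define A where "A = {s \<in> ?P. \<not> Sp G (s ` {..<t-1})}"
  define B where "B = {s \<in> ?P. \<not> Sp G (s ` {..<t})}"
  have BA: "B \<subseteq> A"
  proof
    fix s assume "s \<in> B"
    moreover have "s ` {..<t-1} \<subseteq> s ` {..<t}" by (rule image_mono) auto
    ultimately show "s \<in> A" unfolding A_def B_def using Sp_mono[of G "s ` {..<t-1}" "s ` {..<t}"] by auto
  qed
  have finA: "finite A" unfolding A_def by (simp add: finite_PiE)
  have eq: "{s \<in> ?P. draws_span G t s \<and> \<not> draws_span G (t - 1) s} = A - B"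
    unfolding A_def B_def draws_span_Sp by auto
  have cA: "real (card A) = (\<Sum>R\<in>UNIV. gM G R * real (card R) ^ (t-1) * real CARD('n) ^ 1)"
    unfolding A_def using t by (subst count_ns) auto
  have cB: "real (card B) = (\<Sum>R\<in>UNIV. gM G R * real (card R) ^ t * real CARD('n) ^ 0)"
    unfolding B_def using t by (subst count_ns) auto
  have n0: "real CARD('n) > 0" by simp
  have nt: "real CARD('n) ^ t = real CARD('n) ^ (t-1) * real CARD('n)"
    using t by (metis Suc_diff_le diff_Suc_1 power_Suc2)
  have "stop_prob G t = (real (card A) - real (card B)) / real CARD('n) ^ t"
    unfolding stop_prob_def eq using BA finA by (simp add: card_Diff_subset card_mono of_nat_diff finite_subset)
  also have "\<dots> = (\<Sum>R\<in>UNIV. (gM G R * real (card R) ^ (t-1) * real CARD('n) - gM G R * real (card R) ^ t) / real CARD('n) ^ t)"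
    unfolding cA cB by (simp only: sum_subtractf[symmetric] sum_divide_distrib) simp
  also have "\<dots> = (\<Sum>R\<in>UNIV. gM G R * ((real (card R) / real CARD('n))^(t-1) - (real (card R) / real CARD('n))^t))"
    by (rule sum.cong[OF refl]) (use n0 in \<open>simp add: nt power_divide field_simps\<close>)
  finally show ?thesis .
qed

lemma ser:
  fixes x :: real
  assumes "0 \<le> x" "x \<le> 1"
  shows "(\<lambda>t. real t * (x^(t-1) - x^t)) sums (if x < 1 then 1 / (1 - x) else 0)"
proof (cases "x < 1")
  case True
  have "(\<lambda>n. of_nat (Suc n) * x ^ n) sums (1 / (1 - x)^2)"
    by (rule geometric_deriv_sums) (use assms True in auto)
  then have "(\<lambda>n. (1 - x) * (of_nat (Suc n) * x ^ n)) sums ((1 - x) * (1 / (1 - x)^2))"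
    by (rule sums_mult)
  moreover have "(1 - x) * (1 / (1 - x)^2) = 1 / (1 - x)" using True by (simp add: power2_eq_square)
  moreover have "(\<lambda>n. (1 - x) * (of_nat (Suc n) * x ^ n)) = (\<lambda>n. real (Suc n) * (x^(Suc n - 1) - x^(Suc n)))"
    by (rule ext) (simp add: algebra_simps)
  ultimately have "(\<lambda>n. real (Suc n) * (x^(Suc n - 1) - x^(Suc n))) sums (1 / (1 - x))" by metis
  then have "(\<lambda>t. real t * (x^(t-1) - x^t)) sums (1 / (1 - x) + 0)"
    by (subst (asm) sums_Suc_iff) simp
  then show ?thesis using True by simp
next
  case False
  then have "x = 1" using assms by simp
  then show ?thesis by simp
qed

lemma expected_formula:
  fixes G :: "'a::field^'n^'k"
  shows "expected_draws G = (\<Sum>R\<in>UNIV. gM G R * (if card R < CARD('n) then real CARD('n) / (real CARD('n) - real (card R)) else 0))"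
proof -
  define x where "x R = real (card R) / real CARD('n)" for R :: "'n set"
  have x01: "0 \<le> x R" "x R \<le> 1" for R
    unfolding x_def by (auto simp: card_mono divide_le_eq_1)
  have x1: "x R < 1 \<longleftrightarrow> card R < CARD('n)" for R
    unfolding x_def by (simp add: divide_less_eq_1)
  have terms: "real t * stop_prob G t = (\<Sum>R\<in>UNIV. gM G R * (real t * (x R^(t-1) - x R^t)))" for t
  proof (cases "t \<ge> 1")
    case True
    then show ?thesis unfolding stop_prob_formula[OF True] x_def
      by (simp add: sum_distrib_left mult_ac)
  next
    case False
    then have "t = 0" by simp
    then show ?thesis by simp
  qed
  have "(\<lambda>t. \<Sum>R\<in>UNIV. gM G R * (real t * (x R^(t-1) - x R^t))) sums
        (\<Sum>R\<in>UNIV. gM G R * (if x R < 1 then 1 / (1 - x R) else 0))"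
    by (intro sums_sum sums_mult ser x01)
  then have "(\<lambda>t. real t * stop_prob G t) sums
        (\<Sum>R\<in>UNIV. gM G R * (if x R < 1 then 1 / (1 - x R) else 0))"
    by (simp only: terms)
  then have "expected_draws G = (\<Sum>R\<in>UNIV. gM G R * (if x R < 1 then 1 / (1 - x R) else 0))"
    unfolding expected_draws_def by (rule sums_unique[symmetric])
  also have "\<dots> = (\<Sum>R\<in>UNIV. gM G R * (if card R < CARD('n) then real CARD('n) / (real CARD('n) - real (card R)) else 0))"
  proof (rule sum.cong[OF refl])
    fix R :: "'n set"
    show "gM G R * (if x R < 1 then 1 / (1 - x R) else 0) = gM G R * (if card R < CARD('n) then real CARD('n) / (real CARD('n) - real (card R)) else 0)"
      unfolding x1 by (simp add: x_def field_simps)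
  qed
  finally show ?thesis .
qed

lemma sum_pow_card:
  fixes \<phi> :: "nat \<Rightarrow> real"
  assumes S: "finite S"
  shows "(\<Sum>R | R \<subseteq> S. \<phi> (card R)) = (\<Sum>i\<le>card S. real (card S choose i) * \<phi> i)"
proof -
  have "(\<Sum>R | R \<subseteq> S. \<phi> (card R)) = (\<Sum>i\<le>card S. \<Sum>R\<in>{R. R \<in> {R. R \<subseteq> S} \<and> card R = i}. \<phi> (card R))"
    by (rule sum.group[symmetric]) (use S in \<open>auto intro: card_mono\<close>)
  also have "\<dots> = (\<Sum>i\<le>card S. real (card S choose i) * \<phi> i)"
  proof (rule sum.cong[OF refl])
    fix i
    have "{R. R \<in> {R. R \<subseteq> S} \<and> card R = i} = {R. R \<subseteq> S \<and> card R = i}" by auto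
    then show "(\<Sum>R\<in>{R. R \<in> {R. R \<subseteq> S} \<and> card R = i}. \<phi> (card R)) = real (card S choose i) * \<phi> i"
      using n_subsets[OF S, of i] by simp
  qed
  finally show ?thesis .
qed

lemma expected_ns:
  fixes G :: "'a::field^'n^'k"
  assumes full: "Sp G UNIV"
  shows "expected_draws G = (\<Sum>S\<in>UNIV. ns G S / real ((CARD('n) - 1) choose card S))"
proof -
  define h where "h R = (if card R < CARD('n) then real CARD('n) / (real CARD('n) - real (card R)) else 0)" for R :: "'n set"
  have "expected_draws G = (\<Sum>R\<in>UNIV. gM G R * h R)"
    unfolding expected_formula h_def ..
  also have "\<dots> = (\<Sum>R\<in>UNIV. \<Sum>S\<in>{S. S \<in> UNIV \<and> R \<subseteq> S}. (-1)^(card S - card R) * ns G S * h R)"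
    unfolding gM_def by (simp add: sum_distrib_right)
  also have "\<dots> = (\<Sum>S\<in>UNIV. \<Sum>R\<in>{R. R \<in> UNIV \<and> R \<subseteq> S}. (-1)^(card S - card R) * ns G S * h R)"
    by (rule sum.swap_restrict) auto
  also have "\<dots> = (\<Sum>S\<in>UNIV. ns G S / real ((CARD('n) - 1) choose card S))"
  proof (rule sum.cong[OF refl])
    fix S :: "'n set"
    show "(\<Sum>R\<in>{R. R \<in> UNIV \<and> R \<subseteq> S}. (-1)^(card S - card R) * ns G S * h R) = ns G S / real ((CARD('n) - 1) choose card S)"
    proof (cases "Sp G S")
      case True
      then show ?thesis by (simp add: ns_def)
    next
      case False
      then have "S \<noteq> UNIV" using full by auto
      then have cS: "card S < CARD('n)" by (simp add: psubset_card_mono psubsetI)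
      have "(\<Sum>R\<in>{R. R \<in> UNIV \<and> R \<subseteq> S}. (-1)^(card S - card R) * ns G S * h R)
          = (\<Sum>R | R \<subseteq> S. (\<lambda>i. (-1)^(card S - i) * (real CARD('n) / (real CARD('n) - real i))) (card R))"
      proof (rule sum.cong)
        fix R assume "R \<in> {R. R \<subseteq> S}"
        then have "card R \<le> card S" by (simp add: card_mono)
        then show "(-1)^(card S - card R) * ns G S * h R = (\<lambda>i. (-1)^(card S - i) * (real CARD('n) / (real CARD('n) - real i))) (card R)"
          using False cS by (simp add: ns_def h_def)
      qed auto
      also have "\<dots> = (\<Sum>i\<le>card S. real (card S choose i) * ((-1)^(card S - i) * (real CARD('n) / (real CARD('n) - real i))))"
        by (rule sum_pow_card) simp
      also have "\<dots> = 1 / real ((CARD('n) - 1) choose card S)"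
        using alt_recip[OF cS] by (simp add: mult_ac)
      finally show ?thesis using False by (simp add: ns_def)
    qed
  qed
  finally show ?thesis .
qed



lemma card_subspace:
  fixes U :: "('a::{finite,field}^'n) set"
  assumes U: "vec.subspace U"
  shows "card U = CARD('a) ^ vec.dim U"
proof -
  obtain B where B: "B \<subseteq> U" "vec.independent B" "U \<subseteq> vec.span B" "card B = vec.dim U"
    using vec.basis_exists[of U] by blast
  have finB: "finite B" using B(2) vec.independent_explicit by blast
  have spanB: "vec.span B = U"
    using B(1,3) U by (meson antisym vec.span_minimal)
  define \<phi> where "\<phi> c = (\<Sum>v\<in>B. c v *s v)" for c :: "'a^'n \<Rightarrow> 'a"
  have bij: "bij_betw \<phi> (B \<rightarrow>\<^sub>E (UNIV::'a set)) U"
    unfolding bij_betw_def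
  proof
    show "inj_on \<phi> (B \<rightarrow>\<^sub>E UNIV)"
    proof (rule inj_onI)
      fix c c' assume c: "c \<in> B \<rightarrow>\<^sub>E UNIV" and c': "c' \<in> B \<rightarrow>\<^sub>E UNIV" and eq: "\<phi> c = \<phi> c'"
      have "(\<Sum>v\<in>B. (c v - c' v) *s v) = \<phi> c - \<phi> c'"
        unfolding \<phi>_def by (simp add: vec.scale_left_diff_distrib sum_subtractf)
      then have "(\<Sum>v\<in>B. (c v - c' v) *s v) = 0" using eq by simp
      moreover have indep: "\<forall>cc. (\<Sum>v\<in>B. cc v *s v) = 0 \<longrightarrow> (\<forall>v\<in>B. cc v = 0)"
        using B(2) vec.independent_explicit by blast
      have "(\<Sum>v\<in>B. (c v - c' v) *s v) = 0 \<longrightarrow> (\<forall>v\<in>B. c v - c' v = 0)"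
        using indep by (erule_tac allE[where x="\<lambda>v. c v - c' v"]) assumption
      ultimately have "\<forall>v\<in>B. c v - c' v = 0" by blast
      then show "c = c'" using c c' by (intro PiE_ext) auto
    qed
  next
    show "\<phi> ` (B \<rightarrow>\<^sub>E UNIV) = U"
    proof
      show "\<phi> ` (B \<rightarrow>\<^sub>E UNIV) \<subseteq> U"
      proof (rule image_subsetI)
        fix c :: "'a^'n \<Rightarrow> 'a"
        have "(\<Sum>v\<in>B. c v *s v) \<in> vec.span B"
          by (rule vec.span_sum) (simp add: vec.span_base vec.span_scale)
        then show "\<phi> c \<in> U" unfolding \<phi>_def spanB .
      qed
    next
      show "U \<subseteq> \<phi> ` (B \<rightarrow>\<^sub>E UNIV)"
      proof
        fix x assume "x \<in> U"
        then have "x \<in> vec.span B" using spanB by simp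
        then obtain u where x: "x = (\<Sum>v\<in>B. u v *s v)"
          using vec.span_finite[OF finB] by auto
        have "restrict u B \<in> B \<rightarrow>\<^sub>E UNIV" by simp
        moreover have "\<phi> (restrict u B) = x" unfolding \<phi>_def x by (rule sum.cong) auto
        ultimately show "x \<in> \<phi> ` (B \<rightarrow>\<^sub>E UNIV)" by (metis image_eqI)
      qed
    qed
  qed
  have "card U = card (B \<rightarrow>\<^sub>E (UNIV::'a set))" using bij_betw_same_card[OF bij] by simp
  also have "\<dots> = CARD('a) ^ card B" using finB by (simp add: card_PiE)
  finally show ?thesis using B(4) by simp
qed

definition GS :: "'a::field^'n^'k \<Rightarrow> 'n set \<Rightarrow> 'a^'n^'k" where
  "GS G S = (\<chi> i j. if j \<in> S then G$i$j else 0)"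

lemma Sp_kernel:
  fixes G :: "'a::field^'n^'k"
  shows "Sp G S \<longleftrightarrow> (\<forall>u. (\<forall>j\<in>S. (u v* G)$j = 0) \<longrightarrow> u = 0)"
proof -
  have col: "column j (GS G S) = (if j \<in> S then column j G else 0)" for j
    by (simp add: GS_def column_def vec_eq_iff)
  have "columns (GS G S) \<subseteq> insert 0 ((\<lambda>j. column j G) ` S)"
    by (auto simp: columns_def col)
  moreover have "(\<lambda>j. column j G) ` S \<subseteq> columns (GS G S)"
    by (auto simp: columns_def col)
  ultimately have sp: "vec.span (columns (GS G S)) = vec.span ((\<lambda>j. column j G) ` S)"
    by (metis antisym vec.span_insert_0 vec.span_mono)
  have vm: "(u v* GS G S) = (\<chi> j. if j \<in> S then (u v* G)$j else 0)" for u
    by (simp add: GS_def vector_matrix_mult_def vec_eq_iff if_distrib cong: if_cong)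
  have "Sp G S \<longleftrightarrow> (\<exists>B. GS G S ** B = mat 1)"
    unfolding Sp_def matrix_right_invertible_span_columns sp ..
  also have "\<dots> \<longleftrightarrow> (\<exists>B. B ** transpose (GS G S) = mat 1)"
    by (rule left_invertible_transpose[symmetric])
  also have "\<dots> \<longleftrightarrow> (\<forall>x. transpose (GS G S) *v x = 0 \<longrightarrow> x = 0)"
    by (rule matrix_left_invertible_ker)
  also have "\<dots> \<longleftrightarrow> (\<forall>u. (\<forall>j\<in>S. (u v* G)$j = 0) \<longrightarrow> u = 0)"
    by (simp add: vm vec_eq_iff Ball_def)
  finally show ?thesis .
qed



lemma card_ext_fun:
  fixes A :: "'b set"
  assumes "finite A"
  shows "card {X :: nat \<Rightarrow> 'b. (\<forall>i<m. X i \<in> A) \<and> (\<forall>i\<ge>m. X i = z)} = card A ^ m"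
    and "finite {X :: nat \<Rightarrow> 'b. (\<forall>i<m. X i \<in> A) \<and> (\<forall>i\<ge>m. X i = z)}"
proof -
  let ?E = "{X :: nat \<Rightarrow> 'b. (\<forall>i<m. X i \<in> A) \<and> (\<forall>i\<ge>m. X i = z)}"
  have bij: "bij_betw (\<lambda>X. restrict X {..<m}) ?E ({..<m} \<rightarrow>\<^sub>E A)"
  proof (rule bij_betw_byWitness[where f'="\<lambda>Y i. if i < m then Y i else z"])
    show "\<forall>X\<in>?E. (\<lambda>i. if i < m then restrict X {..<m} i else z) = X"
    proof
      fix X assume X: "X \<in> ?E"
      show "(\<lambda>i. if i < m then restrict X {..<m} i else z) = X"
      proof
        fix i show "(if i < m then restrict X {..<m} i else z) = X i" using X by (cases "i < m") (simp_all add: not_less)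
      qed
    qed
    show "\<forall>Y\<in>{..<m} \<rightarrow>\<^sub>E A. restrict (\<lambda>i. if i < m then Y i else z) {..<m} = Y"
    proof
      fix Y assume Y: "Y \<in> {..<m} \<rightarrow>\<^sub>E A"
      show "restrict (\<lambda>i. if i < m then Y i else z) {..<m} = Y"
      proof (rule ext)
        fix i show "restrict (\<lambda>i. if i < m then Y i else z) {..<m} i = Y i"
        proof (cases "i < m")
          case True then show ?thesis by simp
        next
          case False
          have "Y i = undefined" by (rule PiE_arb[OF Y]) (use False in simp)
          then show ?thesis using False by simp
        qed
      qed
    qed
    show "(\<lambda>X. restrict X {..<m}) ` ?E \<subseteq> {..<m} \<rightarrow>\<^sub>E A"
    proof (rule image_subsetI)
      fix X assume X: "X \<in> ?E"
      show "restrict X {..<m} \<in> {..<m} \<rightarrow>\<^sub>E A"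
        unfolding restrict_PiE_iff using X by simp
    qed
    show "(\<lambda>Y i. if i < m then Y i else z) ` ({..<m} \<rightarrow>\<^sub>E A) \<subseteq> ?E" by (rule image_subsetI) (simp add: PiE_iff)
  qed
  show "card ?E = card A ^ m"
    using bij_betw_same_card[OF bij] by (simp add: card_PiE)
  show "finite ?E"
    using bij_betw_finite[OF bij] assms by (simp add: finite_PiE)
qed

lemma finite_ext_code: "finite (ext_code (C :: ('a::{finite,zero} ^ 'n) set) m)"
  unfolding ext_code_def using card_ext_fun(2)[of C m 0] by simp

definition US :: "('a::field ^ 'n) set \<Rightarrow> 'n set \<Rightarrow> ('a ^ 'n) set" where
  "US C S = {c \<in> C. \<forall>j\<in>S. c$j = 0}"

lemma US_subspace: "vec.subspace C \<Longrightarrow> vec.subspace (US C S)"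
  unfolding US_def vec.subspace_def by simp

lemma ext_vanish:
  "{X \<in> ext_code C m. \<forall>i. \<forall>j\<in>S. X i $ j = 0} = {X. (\<forall>i<m. X i \<in> US C S) \<and> (\<forall>i\<ge>m. X i = 0)}"
proof (rule Collect_cong)
  fix X
  show "(X \<in> ext_code C m \<and> (\<forall>i. \<forall>j\<in>S. X i $ j = 0)) = ((\<forall>i<m. X i \<in> US C S) \<and> (\<forall>i\<ge>m. X i = 0))"
  proof
    assume a: "X \<in> ext_code C m \<and> (\<forall>i. \<forall>j\<in>S. X i $ j = 0)"
    then show "(\<forall>i<m. X i \<in> US C S) \<and> (\<forall>i\<ge>m. X i = 0)"
      unfolding ext_code_def US_def by simp
  next
    assume a: "(\<forall>i<m. X i \<in> US C S) \<and> (\<forall>i\<ge>m. X i = 0)"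
    have "X i $ j = 0" if "j \<in> S" for i j
    proof (cases "i < m")
      case True then show ?thesis using a that unfolding US_def by simp
    next
      case False then have "X i = 0" using a by simp
      then show ?thesis by simp
    qed
    moreover have "X \<in> ext_code C m" using a unfolding ext_code_def US_def by simp
    ultimately show "X \<in> ext_code C m \<and> (\<forall>i. \<forall>j\<in>S. X i $ j = 0)" by blast
  qed
qed

lemma sum_weights:
  fixes C :: "('a::{finite,field} ^ 'n) set"
  shows "(\<Sum>S | card S = r. real (card {X \<in> ext_code C m. \<forall>i. \<forall>j\<in>S. X i $ j = 0}))
       = (\<Sum>l=0..CARD('n). real (W_ext C m l) * real ((CARD('n) - l) choose r))"
proof -
  let ?E = "ext_code C m"
  define supp where "supp X = {j. \<exists>i. X i $ j \<noteq> 0}" for X :: "nat \<Rightarrow> 'a^'n"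
  have finE: "finite ?E" by (rule finite_ext_code)
  have P: "(\<forall>i. \<forall>j\<in>S. X i $ j = 0) \<longleftrightarrow> S \<subseteq> - supp X" for S X
    unfolding supp_def by auto
  have "(\<Sum>S | card S = r. real (card {X \<in> ?E. \<forall>i. \<forall>j\<in>S. X i $ j = 0}))
      = (\<Sum>S\<in>{S. card S = r}. \<Sum>X\<in>?E. if S \<subseteq> - supp X then 1 else 0)"
    by (rule sum.cong[OF refl]) (simp add: P sum.If_cases finE Int_def)
  also have "\<dots> = (\<Sum>X\<in>?E. \<Sum>S\<in>{S. card S = r}. if S \<subseteq> - supp X then 1 else 0)"
    by (rule sum.swap)
  also have "\<dots> = (\<Sum>X\<in>?E. real ((CARD('n) - ext_weight X) choose r))"
  proof (rule sum.cong[OF refl])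
    fix X assume "X \<in> ?E"
    have "(\<Sum>S\<in>{S. card S = r}. if S \<subseteq> - supp X then 1 else (0::real)) = real (card {S. S \<subseteq> - supp X \<and> card S = r})"
      by (simp add: sum.If_cases Int_def conj_commute)
    also have "card {S. S \<subseteq> - supp X \<and> card S = r} = card (- supp X) choose r"
      by (rule n_subsets) simp
    also have "card (- supp X) = CARD('n) - ext_weight X"
      unfolding ext_weight_def supp_def[symmetric] by (simp add: Compl_eq_Diff_UNIV card_Diff_subset)
    finally show "(\<Sum>S\<in>{S. card S = r}. if S \<subseteq> - supp X then 1 else (0::real)) = real ((CARD('n) - ext_weight X) choose r)" .
  qed
  also have "\<dots> = (\<Sum>l\<in>{0..CARD('n)}. \<Sum>X\<in>{X. X \<in> ?E \<and> ext_weight X = l}. real ((CARD('n) - ext_weight X) choose r))"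
    by (rule sum.group[symmetric]) (auto simp: finE ext_weight_def card_mono)
  also have "\<dots> = (\<Sum>l=0..CARD('n). real (W_ext C m l) * real ((CARD('n) - l) choose r))"
    by (rule sum.cong[OF refl]) (simp add: W_ext_def)
  finally show ?thesis .
qed



lemma gm_inj0:
  assumes "generator_matrix C G" "u v* G = 0"
  shows "u = 0"
proof -
  have "inj (\<lambda>u. u v* G)" using assms(1) unfolding generator_matrix_def by simp
  moreover have "u v* G = 0 v* G" using assms(2) by simp
  ultimately show ?thesis by (metis injD)
qed

lemma gm_Sp_UNIV:
  assumes "generator_matrix C G"
  shows "Sp G UNIV"
  unfolding Sp_kernel
proof (intro allI impI)
  fix u assume "\<forall>j\<in>UNIV. (u v* G) $ j = 0"
  then have "u v* G = 0" by (simp add: vec_eq_iff)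
  then show "u = 0" using gm_inj0[OF assms] by blast
qed

lemma gm_in: "generator_matrix C G \<Longrightarrow> u v* G \<in> C"
  unfolding generator_matrix_def by blast

lemma gm_0: "generator_matrix C G \<Longrightarrow> 0 \<in> C"
  using gm_in[of C G 0] by simp

lemma gm_Sp_US:
  fixes G :: "'a::field^'n^'k"
  assumes gen: "generator_matrix C G"
  shows "Sp G S \<longleftrightarrow> US C S = {0}"
proof
  assume sp: "Sp G S"
  show "US C S = {0}"
  proof
    show "US C S \<subseteq> {0}"
    proof
      fix c assume c: "c \<in> US C S"
      then have "c \<in> C" unfolding US_def by simp
      then obtain u where u: "c = u v* G" using gen unfolding generator_matrix_def by blast
      have "\<forall>j\<in>S. (u v* G)$j = 0" using c u unfolding US_def by simp
      then have "u = 0" using sp unfolding Sp_kernel by blast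
      then show "c \<in> {0}" using u by simp
    qed
    show "{0} \<subseteq> US C S" using gm_0[OF gen] unfolding US_def by simp
  qed
next
  assume us: "US C S = {0}"
  show "Sp G S"
    unfolding Sp_kernel
  proof (intro allI impI)
    fix u assume "\<forall>j\<in>S. (u v* G) $ j = 0"
    then have "u v* G \<in> US C S" unfolding US_def using gm_in[OF gen] by simp
    then have "u v* G = 0" using us by simp
    then show "u = 0" using gm_inj0[OF gen] by blast
  qed
qed

lemma gm_dim:
  fixes G :: "'a::field^'n^'k"
  assumes gen: "generator_matrix C G"
  shows "vec.dim C = CARD('k)"
proof -
  have e: "(*v) (transpose G) = (\<lambda>u. u v* G)" by (rule ext) simp
  have lin: "Vector_Spaces.linear (*s) (*s) (\<lambda>u. u v* G)"
    using matrix_vector_mul_linear_gen[of "transpose G"] unfolding e .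
  have inj: "inj_on (\<lambda>u. u v* G) (vec.span UNIV)"
    using gen unfolding generator_matrix_def by simp
  have "vec.dim ((\<lambda>u. u v* G) ` UNIV) = vec.dim (UNIV :: ('a^'k) set)"
    by (rule vec.dim_image_eq[OF lin inj])
  then show ?thesis using gen vec_dim_card unfolding generator_matrix_def by simp
qed

lemma gm_small:
  fixes G :: "'a::field^'n^'k"
  assumes "card S < CARD('k)"
  shows "\<not> Sp G S"
proof
  assume "Sp G S"
  then have "UNIV \<subseteq> vec.span ((\<lambda>j. column j G) ` S)" unfolding Sp_def by simp
  then have "vec.dim (UNIV :: ('a^'k) set) \<le> card ((\<lambda>j. column j G) ` S)"
    by (rule vec.dim_le_card) simp
  also have "\<dots> \<le> card S" by (rule card_image_le) simp
  finally show False using assms vec_dim_card by (metis not_le)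
qed

lemma gm_big:
  fixes C :: "('a::{finite,field}^'n) set" and G :: "'a^'n^'k"
  assumes gen: "generator_matrix C G" and ns: "\<not> Sp G S"
  shows "min_dist C \<le> CARD('n) - card S"
proof -
  obtain u where u: "\<forall>j\<in>S. (u v* G)$j = 0" "u \<noteq> 0" using ns unfolding Sp_kernel by blast
  define c where "c = u v* G"
  have cC: "c \<in> C - {0}" using gm_in[OF gen] gm_inj0[OF gen] u unfolding c_def by blast
  have "min_dist C \<le> hweight c"
    unfolding min_dist_def using cC by (intro Min_le) auto
  also have "hweight c \<le> card (- S)"
    unfolding hweight_def using u(1) unfolding c_def by (intro card_mono) auto
  also have "card (- S) = CARD('n) - card S"
    by (simp add: Compl_eq_Diff_UNIV card_Diff_subset)
  finally show ?thesis .
qed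

lemma gm_d_bounds:
  fixes C :: "('a::{finite,field}^'n) set" and G :: "'a^'n^'k"
  assumes gen: "generator_matrix C G"
  shows "1 \<le> min_dist C" "min_dist C \<le> CARD('n)"
proof -
  define u :: "'a^'k" where "u = (\<chi> i. 1)"
  have "u \<noteq> 0" unfolding u_def by (simp add: vec_eq_iff)
  then have ne: "u v* G \<in> C - {0}" using gm_in[OF gen] gm_inj0[OF gen] by blast
  have fin: "finite (hweight ` (C - {0}))" by simp
  have "min_dist C \<in> hweight ` (C - {0})"
    unfolding min_dist_def using ne by (intro Min_in fin) auto
  then obtain c where c: "c \<in> C" "c \<noteq> 0" "min_dist C = hweight c" by auto
  from c(2) obtain j where "c $ j \<noteq> 0" by (auto simp: vec_eq_iff)
  then have "{j. c $ j \<noteq> 0} \<noteq> {}" by auto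
  then show "1 \<le> min_dist C" using c(3) unfolding hweight_def
    by (simp add: Suc_le_eq card_gt_0_iff)
  show "min_dist C \<le> CARD('n)" using c(3) unfolding hweight_def by (simp add: card_mono)
qed

lemma card_field_gt1: "real CARD('a::{finite,field}) > 1"
proof -
  have "card {0::'a, 1} \<le> CARD('a)" by (rule card_mono) auto
  then have "2 \<le> CARD('a)" by simp
  then show ?thesis by simp
qed

lemma count_Sp:
  fixes C :: "('a::{finite,field}^'n) set" and G :: "'a^'n^'k"
  assumes gen: "generator_matrix C G" and sub: "vec.subspace C"
  shows "real (card {S. card S = r \<and> Sp G S}) =
    (\<Sum>l=0..CARD('n)-r. real ((CARD('n)-l) choose r) *
       (\<Sum>m=0..CARD('n). (-1)^m * real (W_ext C m l) * gamma_coeff (real CARD('a)) m CARD('n)))"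
proof -
  define n where "n = CARD('n)"
  define q where "q = real CARD('a)"
  have q1: "q > 1" unfolding q_def by (rule card_field_gt1)
  define \<gamma> where "\<gamma> m = gamma_coeff q m n" for m
  have ind: "(if Sp G S then 1 else 0) = (\<Sum>m=0..n. (-1)^m * \<gamma> m * real (card (US C S))^m)" for S
  proof -
    define u where "u = vec.dim (US C S)"
    have sU: "vec.subspace (US C S)" by (rule US_subspace[OF sub])
    have cU: "real (card (US C S)) = q^u"
      unfolding u_def q_def using card_subspace[OF sU] by simp
    have un: "u \<le> n" unfolding u_def n_def by (rule dim_subset_UNIV_cart_gen)
    have "Sp G S \<longleftrightarrow> u = 0"
      unfolding gm_Sp_US[OF gen] u_def vec.dim_eq_0
      using gm_0[OF gen] unfolding US_def by auto
    then show ?thesis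
      unfolding cU \<gamma>_def using gamma_identity[OF q1 un] by simp
  qed
  have finU: "finite (US C S)" for S by simp
  have pw: "real (card (US C S))^m = real (card {X \<in> ext_code C m. \<forall>i. \<forall>j\<in>S. X i $ j = 0})" for S m
    unfolding ext_vanish card_ext_fun(1)[OF finU] by simp
  have "real (card {S. card S = r \<and> Sp G S}) = (\<Sum>S | card S = r. (if Sp G S then 1 else 0))"
    by (simp add: sum.If_cases Int_def conj_commute)
  also have "\<dots> = (\<Sum>S | card S = r. \<Sum>m=0..n. (-1)^m * \<gamma> m * real (card {X \<in> ext_code C m. \<forall>i. \<forall>j\<in>S. X i $ j = 0}))"
    by (simp only: ind pw)
  also have "\<dots> = (\<Sum>m=0..n. (-1)^m * \<gamma> m * (\<Sum>S | card S = r. real (card {X \<in> ext_code C m. \<forall>i. \<forall>j\<in>S. X i $ j = 0})))"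
    by (subst sum.swap) (simp add: sum_distrib_left)
  also have "\<dots> = (\<Sum>m=0..n. (-1)^m * \<gamma> m * (\<Sum>l=0..n. real (W_ext C m l) * real ((n - l) choose r)))"
    unfolding n_def sum_weights ..
  also have "\<dots> = (\<Sum>m=0..n. \<Sum>l=0..n. (-1)^m * \<gamma> m * (real (W_ext C m l) * real ((n - l) choose r)))"
    by (simp add: sum_distrib_left)
  also have "\<dots> = (\<Sum>l=0..n. \<Sum>m=0..n. (-1)^m * \<gamma> m * (real (W_ext C m l) * real ((n - l) choose r)))"
    by (rule sum.swap)
  also have "\<dots> = (\<Sum>l=0..n. real ((n-l) choose r) * (\<Sum>m=0..n. (-1)^m * real (W_ext C m l) * \<gamma> m))"
    by (simp add: sum_distrib_left mult_ac)
  also have "\<dots> = (\<Sum>l=0..n-r. real ((n-l) choose r) * (\<Sum>m=0..n. (-1)^m * real (W_ext C m l) * \<gamma> m))"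
    by (rule sum.mono_neutral_right) auto
  finally show ?thesis unfolding n_def q_def \<gamma>_def .
qed



lemma harm_part:
  assumes d: "1 \<le> d" "d \<le> n"
  shows "(\<Sum>r\<le>n-d. real n / (real n - real r)) = real n * (harm n - harm (d - 1))"
proof -
  have split: "{1..n} = {1..d-1} \<union> {d..n}" using d by auto
  have "harm n = (harm (d-1) :: real) + (\<Sum>i=d..n. inverse (real i))"
    unfolding harm_def split using d by (subst sum.union_disjoint) auto
  then have h: "harm n - harm (d-1) = (\<Sum>i=d..n. inverse (real i))" by simp
  have "(\<Sum>r\<le>n-d. real n / (real n - real r)) = real n * (\<Sum>r\<le>n-d. inverse (real (n - r)))"
    by (simp add: sum_distrib_left divide_inverse of_nat_diff)
  also have "(\<Sum>r\<le>n-d. inverse (real (n - r))) = (\<Sum>i=d..n. inverse (real i))"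
    by (rule sum.reindex_bij_witness[where i="\<lambda>i. n - i" and j="\<lambda>r. n - r"]) (use d in auto)
  finally show ?thesis using h by simp
qed

theorem mainTheorem12:
  fixes C :: "('a::{finite,field} ^ 'n) set"
    and G :: "'a ^ 'n ^ 'k"
    and q n k d :: nat
  assumes "q = CARD('a)"
    and "n = CARD('n)"
    and "vec.subspace C"
    and "vec.dim C = k"
    and "2 \<le> k" and "k \<le> n"
    and "d = min_dist C"
    and "generator_matrix C G"
  shows "expected_draws G =
      real n * (harm n - harm (d - 1))
      - (\<Sum>r=k..n-d. (1 / real ((n - 1) choose r)) *
           (\<Sum>l=0..n-r. real ((n - l) choose r) *
              (\<Sum>m=0..n. (-1) ^ m * real (W_ext C m l) * gamma_coeff (real q) m n)))"
proof -
  note q = assms(1) and nn = assms(2) and sub = assms(3) and gen = assms(8)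
  have kk: "k = CARD('k)" using gm_dim[OF gen] assms(4) by simp
  have d1: "1 \<le> d" and dn: "d \<le> n" using gm_d_bounds[OF gen] assms(7) nn by auto
  define N where "N r = card {S :: 'n set. card S = r \<and> \<not> Sp G S}" for r
  define P where "P r = card {S :: 'n set. card S = r \<and> Sp G S}" for r
  have NP: "real (N r) = real (n choose r) - real (P r)" for r
  proof -
    have u: "{S :: 'n set. card S = r} = {S. card S = r \<and> Sp G S} \<union> {S. card S = r \<and> \<not> Sp G S}" by auto
    have "card ({S :: 'n set. card S = r \<and> Sp G S} \<union> {S. card S = r \<and> \<not> Sp G S}) = P r + N r"
      unfolding P_def N_def by (rule card_Un_disjoint) auto
    then have "card {S :: 'n set. card S = r} = P r + N r" by (simp only: u)
    moreover have "card {S :: 'n set. card S = r} = n choose r"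
      using n_subsets[of "UNIV :: 'n set" r] nn by simp
    ultimately show ?thesis by simp
  qed
  have N0: "N r = 0" if "n - d < r" for r
  proof -
    have "{S :: 'n set. card S = r \<and> \<not> Sp G S} = {}"
    proof (rule ccontr)
      assume "{S :: 'n set. card S = r \<and> \<not> Sp G S} \<noteq> {}"
      then obtain S :: "'n set" where "card S = r" "\<not> Sp G S" by auto
      then have "d \<le> n - r" using gm_big[OF gen] assms(7) nn by metis
      then show False using that dn d1 by arith
    qed
    then show ?thesis unfolding N_def by simp
  qed
  have P0: "P r = 0" if "r < k" for r
  proof -
    have "{S :: 'n set. card S = r \<and> Sp G S} = {}"
      using gm_small[of _ G] that kk by auto
    then show ?thesis unfolding P_def by simp
  qed
  have "expected_draws G = (\<Sum>S\<in>UNIV. ns G S / real ((n - 1) choose card S))"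
    using expected_ns[OF gm_Sp_UNIV[OF gen]] nn by simp
  also have "\<dots> = (\<Sum>r\<in>{..n}. \<Sum>S\<in>{S. S \<in> UNIV \<and> card S = r}. ns G S / real ((n - 1) choose card S))"
    by (rule sum.group[symmetric]) (auto simp: nn card_mono)
  also have "\<dots> = (\<Sum>r\<in>{..n}. real (N r) / real ((n - 1) choose r))"
  proof (rule sum.cong[OF refl])
    fix r
    have "(\<Sum>S\<in>{S. S \<in> UNIV \<and> card S = r}. ns G S / real ((n - 1) choose card S))
        = (\<Sum>S\<in>{S. card S = r}. ns G S) / real ((n - 1) choose r)"
      by (simp add: sum_divide_distrib)
    also have "(\<Sum>S\<in>{S :: 'n set. card S = r}. ns G S) = real (N r)"
      unfolding N_def ns_def by (simp add: sum.If_cases Int_def conj_commute)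
    finally show "(\<Sum>S\<in>{S. S \<in> UNIV \<and> card S = r}. ns G S / real ((n - 1) choose card S)) = real (N r) / real ((n - 1) choose r)" .
  qed
  also have "\<dots> = (\<Sum>r\<le>n-d. real (N r) / real ((n - 1) choose r))"
    by (rule sum.mono_neutral_right) (auto simp: N0)
  also have "\<dots> = (\<Sum>r\<le>n-d. real (n choose r) / real ((n - 1) choose r)) - (\<Sum>r\<le>n-d. real (P r) / real ((n - 1) choose r))"
    by (simp add: NP diff_divide_distrib sum_subtractf)
  also have "(\<Sum>r\<le>n-d. real (n choose r) / real ((n - 1) choose r)) = (\<Sum>r\<le>n-d. real n / (real n - real r))"
  proof (rule sum.cong[OF refl])
    fix r assume "r \<in> {..n-d}"
    then have r: "r < n" using d1 dn by auto
    have "real ((n - r) * (n choose r)) = real (n * ((n - 1) choose r))"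
      by (subst binomial_absorb_comp) simp
    then have e: "(real n - real r) * real (n choose r) = real n * real ((n - 1) choose r)"
      using r by (simp add: of_nat_diff)
    have pos: "real ((n - 1) choose r) > 0" using r by simp
    have nr: "real n - real r \<noteq> 0" using r by simp
    show "real (n choose r) / real ((n - 1) choose r) = real n / (real n - real r)"
      using e pos nr by (simp add: field_simps)
  qed
  also have "\<dots> = real n * (harm n - harm (d - 1))" by (rule harm_part[OF d1 dn])
  also have "(\<Sum>r\<le>n-d. real (P r) / real ((n - 1) choose r)) = (\<Sum>r=k..n-d. real (P r) / real ((n - 1) choose r))"
    by (rule sum.mono_neutral_right) (auto simp: P0)
  also have "\<dots> = (\<Sum>r=k..n-d. (1 / real ((n - 1) choose r)) *
           (\<Sum>l=0..n-r. real ((n - l) choose r) *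
              (\<Sum>m=0..n. (-1) ^ m * real (W_ext C m l) * gamma_coeff (real q) m n)))"
    by (rule sum.cong[OF refl]) (simp add: P_def count_Sp[OF gen sub] q nn)
  finally show ?thesis .
qed


end
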